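(* Let $g=\begin{pmatrix}a&b\\c&d\end{pmatrix}\in\mathrm{SL}_2(\mathbb R)\setminus S$. Then $$v(g):=\log\big(|ad|^{1/2}+|bc|^{1/2}\big)=\tfrac12\,d_{\mathbb H}\big(g\,(i\mathbb R_+),\ i\mathbb R_+\big)>0.$$
   Context: $s=\{g\in\mathrm{SL}_2(\mathbb R): abcd=0\}$ (equivalently, $g$ maps some point of $\{0,i\infty\}$ to some point of $\{0,i\infty\}$), and $S=s\cup\{g\in\mathrm{SL}_2(\mathbb R): g(iy_1)=iy_2\text{ for some }y_1,y_2>0\}$. $i\mathbb R_+$ is the imaginary axis (geodesic from $0$ to $i\infty$) in the upper half-plane, and $d_{\mathbb H}(A,B)=\inf_{z\in A,w\in B}d_{\mathbb H}(z,w)$ is the hyperbolic distance between sets. *)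

theory Defs
  imports "HOL-Analysis.Analysis"
begin

text \<open>Elements of SL_2(R) are represented by their four entries (a b; c d) with ad - bc = 1.\<close>
definition sl2 :: "real \<Rightarrow> real \<Rightarrow> real \<Rightarrow> real \<Rightarrow> bool" where
  "sl2 a b c d \<longleftrightarrow> a * d - b * c = 1"

definition mobius :: "real \<Rightarrow> real \<Rightarrow> real \<Rightarrow> real \<Rightarrow> complex \<Rightarrow> complex" where
  "mobius a b c d z = (of_real a * z + of_real b) / (of_real c * z + of_real d)"

definition hdist :: "complex \<Rightarrow> complex \<Rightarrow> real" where
  "hdist z w = arcosh (1 + (cmod (z - w))\<^sup>2 / (2 * Im z * Im w))"

definition hdist_set :: "complex set \<Rightarrow> complex set \<Rightarrow> real" where
  "hdist_set A B = Inf {hdist z w | z w. z \<in> A \<and> w \<in> B}"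

definition imag_axis :: "complex set" where
  "imag_axis = {\<i> * of_real y | y. y > 0}"

definition in_s :: "real \<Rightarrow> real \<Rightarrow> real \<Rightarrow> real \<Rightarrow> bool" where
  "in_s a b c d \<longleftrightarrow> a * b * c * d = 0"

definition in_S :: "real \<Rightarrow> real \<Rightarrow> real \<Rightarrow> real \<Rightarrow> bool" where
  "in_S a b c d \<longleftrightarrow> in_s a b c d \<or>
     (\<exists>y1 y2. y1 > 0 \<and> y2 > 0 \<and> mobius a b c d (\<i> * of_real y1) = \<i> * of_real y2)"

end

theory Submission
  imports Defs
begin

lemma mob_parts:
  assumes "sl2 a b c d" "y > 0"
  shows "Re (mobius a b c d (\<i> * of_real y)) = (a*c*y^2+b*d)/(c^2*y^2+d^2)"
    and "Im (mobius a b c d (\<i> * of_real y)) = y/(c^2*y^2+d^2)"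
proof -
  have det: "a*d = 1 + b*c" using assms by (simp add: sl2_def)
  show "Re (mobius a b c d (\<i> * of_real y)) = (a*c*y^2+b*d)/(c^2*y^2+d^2)"
    by (simp add: mobius_def Re_divide cmod_power2 power2_eq_square algebra_simps add_divide_distrib)
  have "Im (mobius a b c d (\<i> * of_real y)) = y*(a*d-b*c)/(c^2*y^2+d^2)"
    by (simp add: mobius_def Im_divide cmod_power2 power2_eq_square algebra_simps diff_divide_distrib)
  thus "Im (mobius a b c d (\<i> * of_real y)) = y/(c^2*y^2+d^2)" using det by simp
qed

lemma Dpos: assumes "sl2 a b c d" "y > 0" shows "c^2*y^2+d^2 > 0"
proof -
  have "c \<noteq> 0 \<or> d \<noteq> 0" using assms by (auto simp: sl2_def)
  thus ?thesis using assms by (auto intro: add_pos_nonneg add_nonneg_pos)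
qed

lemma abcd_pos:
  assumes "sl2 a b c d" "\<not> in_S a b c d"
  shows "a*b*c*d > 0"
proof (rule ccontr)
  assume "\<not> a*b*c*d > 0"
  moreover have "a*b*c*d \<noteq> 0" using assms(2) by (auto simp: in_S_def in_s_def)
  ultimately have neg: "a*b*c*d < 0" by linarith
  have ac: "a*c \<noteq> 0" using \<open>a*b*c*d \<noteq> 0\<close> by auto
  have "(a*c)*(b*d) < 0" using neg by (simp add: algebra_simps)
  hence q: "-(b*d)/(a*c) > 0"
    using mult_less_0_iff[of "a*c" "b*d"] by (auto simp: divide_less_0_iff)
  define y where "y = sqrt (-(b*d)/(a*c))"
  have y: "y > 0" using q y_def by auto
  have yy: "a*c*y^2 = -(b*d)" using q ac by (simp add: y_def)
  define D where "D = c^2*y^2+d^2"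
  have D: "D > 0" using Dpos[OF assms(1) y] D_def by simp
  have "mobius a b c d (\<i> * of_real y) = \<i> * of_real (y/D)"
    using mob_parts[OF assms(1) y] yy by (simp add: complex_eq_iff D_def)
  moreover have "y/D > 0" using y D by simp
  ultimately show False using assms(2) y unfolding in_S_def by blast
qed


lemma l129: fixes R I K y D a b c d :: real assumes "D>0" "R = (a*c*y^2+b*d)/D" "I = y/D" "K^2 - 1 = 4*(a*c)*(b*d)"
 "(a*c*y^2+b*d)^2 \<ge> 4*(a*c*y^2)*(b*d)" shows "R^2 \<ge> (K^2-1)*I^2"
proof -
  have "R^2 = (a*c*y^2+b*d)^2/D^2" using assms(2) by (simp add: power_divide)
  moreover have "(K^2-1)*I^2 = (4*(a*c*y^2)*(b*d))/D^2" using assms(3,4) by (simp add: power_divide)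
  ultimately show ?thesis using assms(1,5) by (simp add: divide_right_mono)
qed
lemma l162: fixes R I K y D a b c d :: real assumes "D>0" "R = (a*c*y^2+b*d)/D" "I = y/D" "K^2 - 1 = 4*(a*c)*(b*d)"
 "a*c*y^2 = b*d" shows "R^2 = (K^2-1)*I^2"
proof -
  have "R^2 = (2*(b*d))^2/D^2" using assms(2,5) by (simp add: power_divide)
  moreover have "(K^2-1)*I^2 = (4*(a*c*y^2)*(b*d))/D^2" using assms(3,4) by (simp add: power_divide)
  ultimately show ?thesis using assms(5) by (simp add: power2_eq_square)
qed
lemma l176: fixes R I K t :: real assumes "R^2 = (K^2-1)*I^2" "I>0" "K \<ge> 1" "t = K*I"
  shows "(R^2 + I^2 + t^2)/(2*I*t) = K"
proof -
  have "R^2 + I^2 + t^2 = 2*K*K*I*I" using assms by (simp add: power2_eq_square algebra_simps)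
  thus ?thesis using assms by (simp add: power2_eq_square)
qed

lemma setEq: fixes a b c d :: real defines "Q \<equiv> (\<lambda>y t. let z = mobius a b c d (\<i> * of_real y) in
       1 + (cmod (z - \<i> * of_real t))\<^sup>2 / (2 * Im z * t))"
  shows "{hdist z w | z w. z \<in> mobius a b c d ` imag_axis \<and> w \<in> imag_axis}
      = {arcosh (Q y t) | y t. y > 0 \<and> t > 0}"
proof (rule set_eqI, rule iffI)
  fix x assume "x \<in> {hdist z w | z w. z \<in> mobius a b c d ` imag_axis \<and> w \<in> imag_axis}"
  then obtain y t where "y > 0" "t > 0" "x = hdist (mobius a b c d (\<i> * of_real y)) (\<i> * of_real t)"
    unfolding imag_axis_def by blast
  moreover have "hdist (mobius a b c d (\<i> * of_real y)) (\<i> * of_real t) = arcosh (Q y t)"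
    unfolding hdist_def Q_def Let_def by (simp only: Im_i_times Re_complex_of_real)
  ultimately show "x \<in> {arcosh (Q y t) | y t. y > 0 \<and> t > 0}" by blast
next
  fix x assume "x \<in> {arcosh (Q y t) | y t. y > 0 \<and> t > 0}"
  then obtain y t where "y > 0" "t > 0" "x = arcosh (Q y t)" by blast
  moreover have "hdist (mobius a b c d (\<i> * of_real y)) (\<i> * of_real t) = arcosh (Q y t)"
    unfolding hdist_def Q_def Let_def by (simp only: Im_i_times Re_complex_of_real)
  ultimately have xe: "x = hdist (mobius a b c d (\<i> * of_real y)) (\<i> * of_real t)" by simp
  have "mobius a b c d (\<i> * of_real y) \<in> mobius a b c d ` imag_axis"
    using \<open>y>0\<close> unfolding imag_axis_def by blast
  moreover have "\<i> * of_real t \<in> imag_axis" using \<open>t>0\<close> unfolding imag_axis_def by blast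
  ultimately show "x \<in> {hdist z w | z w. z \<in> mobius a b c d ` imag_axis \<and> w \<in> imag_axis}" using xe by blast
qed

lemma q: fixes a b c d :: real assumes P: "a*b*c*d > 0" shows "(b*d)/(a*c) > 0"
proof -
  have "(a*c)*(b*d) > 0" using P by (simp add: mult_ac)
  moreover have "(a*c)^2 > 0" using P by (auto simp: zero_less_power2)
  ultimately have "(a*c)*(b*d) / (a*c)^2 > 0" by (rule divide_pos_pos)
  moreover have "(a*c)*(b*d) / (a*c)^2 = (b*d)/(a*c)" using P by (auto simp: power2_eq_square)
  ultimately show ?thesis by simp
qed

theorem proposition4p4:
  fixes a b c d :: real
  assumes "sl2 a b c d" and "\<not> in_S a b c d"
  shows "ln (sqrt \<bar>a * d\<bar> + sqrt \<bar>b * c\<bar>)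
           = hdist_set (mobius a b c d ` imag_axis) imag_axis / 2
         \<and> ln (sqrt \<bar>a * d\<bar> + sqrt \<bar>b * c\<bar>) > 0"
proof -
  have P: "a*b*c*d > 0" using abcd_pos[OF assms] .
  have det: "a*d - b*c = 1" using assms(1) by (simp add: sl2_def)
  have adbc: "(a*d)*(b*c) > 0" using P by (simp add: algebra_simps)
  define K where "K = \<bar>a*d\<bar> + \<bar>b*c\<bar>"
  have habs: "\<bar>a*d\<bar>*\<bar>b*c\<bar> = (a*d)*(b*c)" using adbc by (simp add: abs_mult_pos abs_mult[symmetric])
  have K2: "K^2 - 1 = 4*(a*c)*(b*d)"
  proof -
    have "K^2 - 1 = K^2 - (a*d-b*c)^2" using det by simp
    also have "\<dots> = 2*\<bar>a*d\<bar>*\<bar>b*c\<bar> + 2*(a*d)*(b*c)"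
      unfolding K_def by (simp add: power2_eq_square algebra_simps)
    finally show ?thesis using habs by (simp add: algebra_simps)
  qed
  have K1: "K \<ge> 1"
  proof -
    have "K^2 \<ge> 1" using K2 P by (simp add: algebra_simps)
    moreover have "K \<ge> 0" by (simp add: K_def)
    ultimately show ?thesis using power2_le_imp_le[of 1 K] by simp
  qed
  define sA where "sA = sqrt \<bar>a*d\<bar>"
  define sB where "sB = sqrt \<bar>b*c\<bar>"
  have sA0: "sA > 0" using adbc sA_def by (auto simp: zero_less_mult_iff)
  have sB0: "sB > 0" using adbc sB_def by (auto simp: zero_less_mult_iff)
  have ss: "sA^2 = \<bar>a*d\<bar>" "sB^2 = \<bar>b*c\<bar>" by (simp_all add: sA_def sB_def)
  have arc: "arcosh K = 2 * ln (sA+sB)"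
  proof -
    have "K^2-1 = 4*(\<bar>a*d\<bar>*\<bar>b*c\<bar>)" using K2 habs by (simp add: mult.commute mult.left_commute)
    hence "sqrt (K^2-1) = sqrt 4 * (sA * sB)" by (simp only: real_sqrt_mult sA_def sB_def)
    hence "sqrt (K^2-1) = 2* sA* sB" by simp
    hence "K + sqrt (K^2-1) = (sA+sB)^2" using ss K_def by (simp add: power2_eq_square algebra_simps)
    thus ?thesis using arcosh_real_def[OF K1] sA0 sB0 by (simp add: ln_realpow)
  qed
  have Lpos: "ln (sA+sB) > 0"
  proof -
    have "sA^2 = sB^2 + 1 \<or> sB^2 = sA^2 + 1"
    proof (cases "a*d > 0")
      case True
      have "\<not> b*c \<le> 0"
      proof
        assume "b*c \<le> 0"
        hence "(a*d)*(b*c) \<le> 0" using True by (simp add: mult_nonneg_nonpos)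
        thus False using adbc by simp
      qed
      hence "b*c > 0" by simp
      thus ?thesis using True ss det by simp
    next
      case False
      have "a*d \<noteq> 0" using adbc by auto
      hence "a*d < 0" using False by linarith
      have "\<not> b*c \<ge> 0"
      proof
        assume "b*c \<ge> 0"
        hence "(a*d)*(b*c) \<le> 0" using \<open>a*d < 0\<close> by (simp add: mult_nonpos_nonneg)
        thus False using adbc by simp
      qed
      hence "b*c < 0" by simp
      thus ?thesis using \<open>a*d < 0\<close> ss det by simp
    qed
    hence "sA > 1 \<or> sB > 1" using sA0 sB0
      using power2_less_imp_less[of 1 sA] power2_less_imp_less[of 1 sB] by auto
    thus ?thesis using sA0 sB0 by auto
  qed
  define Q where "Q = (\<lambda>y t. let z = mobius a b c d (\<i> * of_real y) in
       1 + (cmod (z - \<i> * of_real t))\<^sup>2 / (2 * Im z * t))"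
  have Qge: "Q y t \<ge> K" if y: "y > 0" and t: "t > 0" for y t
  proof -
    define D where "D = c^2*y^2+d^2"
    have D: "D > 0" using Dpos[OF assms(1) y] D_def by simp
    define R where "R = Re (mobius a b c d (\<i> * of_real y))"
    define I where "I = Im (mobius a b c d (\<i> * of_real y))"
    have R: "R = (a*c*y^2+b*d)/D" and I: "I = y/D"
      using mob_parts[OF assms(1) y] by (simp_all add: R_def I_def D_def)
    have I0: "I > 0" using I D y by simp
    have amgm: "(a*c*y^2+b*d)^2 \<ge> 4*(a*c*y^2)*(b*d)"
      using sum_squares_ge_zero[of 0 "a*c*y^2-b*d"] by (simp add: power2_eq_square algebra_simps)
    have "R^2 \<ge> (K^2-1)*I^2"
      using l129[OF D R I K2 amgm] .
    hence h1: "R^2 + I^2 + t^2 \<ge> K^2*I^2 + t^2" by (simp add: algebra_simps)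
    have h2: "K^2*I^2 + t^2 \<ge> 2*K*I*t" using sum_squares_ge_zero[of 0 "K*I - t"]
      by (simp add: power2_eq_square algebra_simps)
    have "Q y t = (R^2 + I^2 + t^2)/(2*I*t)"
    proof -
      have cm: "(cmod (mobius a b c d (\<i> * of_real y) - \<i> * of_real t))^2 = R^2 + (I - t)^2"
        by (simp add: cmod_power2 R_def I_def)
      have "Q y t = 1 + (R^2 + (I - t)^2) / (2 * I * t)"
        unfolding Q_def Let_def cm by (simp add: I_def)
      also have "\<dots> = (R^2 + I^2 + t^2)/(2*I*t)"
        using I0 t by (simp add: field_simps power2_eq_square)
      finally show ?thesis .
    qed
    also have "\<dots> \<ge> K" using h1 h2 I0 t by (simp add: pos_le_divide_eq)
    finally show ?thesis .
  qed
  have Qeq: "\<exists>y t. y > 0 \<and> t > 0 \<and> Q y t = K"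
  proof -
    have q: "(b*d)/(a*c) > 0" using q[OF P] .
    define y where "y = sqrt ((b*d)/(a*c))"
    have y: "y > 0" using q y_def by auto
    have ac: "a*c \<noteq> 0" using P by auto
    have yy: "a*c*y^2 = b*d" using q ac by (simp add: y_def)
    define D where "D = c^2*y^2+d^2"
    have D: "D > 0" using Dpos[OF assms(1) y] D_def by simp
    define R where "R = Re (mobius a b c d (\<i> * of_real y))"
    define I where "I = Im (mobius a b c d (\<i> * of_real y))"
    have R: "R = (a*c*y^2+b*d)/D" and I: "I = y/D"
      using mob_parts[OF assms(1) y] by (simp_all add: R_def I_def D_def)
    have I0: "I > 0" using I D y by simp
    have "R^2 = (K^2-1)*I^2"
      using l162[OF D R I K2 yy] .
    define t where "t = K*I"
    have t: "t > 0" using K1 I0 t_def by simp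
    have "Q y t = (R^2 + I^2 + t^2)/(2*I*t)"
    proof -
      have cm: "(cmod (mobius a b c d (\<i> * of_real y) - \<i> * of_real t))^2 = R^2 + (I - t)^2"
        by (simp add: cmod_power2 R_def I_def)
      have "Q y t = 1 + (R^2 + (I - t)^2) / (2 * I * t)"
        unfolding Q_def Let_def cm by (simp add: I_def)
      also have "\<dots> = (R^2 + I^2 + t^2)/(2*I*t)"
        using I0 t by (simp add: field_simps power2_eq_square)
      finally show ?thesis .
    qed
    also have "\<dots> = K" using l176[OF \<open>R^2 = _\<close> I0 K1 t_def] .
    finally show ?thesis using y t by blast
  qed
  have setEq: "{hdist z w | z w. z \<in> mobius a b c d ` imag_axis \<and> w \<in> imag_axis}
      = {arcosh (Q y t) | y t. y > 0 \<and> t > 0}"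
    unfolding Q_def by (rule setEq)
  have "hdist_set (mobius a b c d ` imag_axis) imag_axis = arcosh K"
    unfolding hdist_set_def setEq
  proof (rule cInf_eq_minimum)
    from Qeq obtain y t where "y > 0" "t > 0" "Q y t = K" by blast
    thus "arcosh K \<in> {arcosh (Q y t) | y t. y > 0 \<and> t > 0}" by force
  next
    fix x assume "x \<in> {arcosh (Q y t) | y t. y > 0 \<and> t > 0}"
    then obtain y t where "y > 0" "t > 0" "x = arcosh (Q y t)" by blast
    moreover have "Q y t \<ge> K" using Qge \<open>y>0\<close> \<open>t>0\<close> by blast
    moreover have "\<not> arcosh (Q y t) < arcosh K"
      using arcosh_less_iff_real[of "Q y t" K] K1 \<open>Q y t \<ge> K\<close> by simp
    ultimately show "arcosh K \<le> x" by simp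
  qed
  thus ?thesis using arc Lpos sA_def sB_def by simp
qed

end
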